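(* Let $0<\mu<L_{\max}^{-1}$ with $L_{\max}=\max_i\|A_i\|_2^2$, let $\{x^n\}$ be generated by GAITA (as in the context) from an arbitrary $x^0\in\mathbf{R}^N$, and suppose $\{x^n\}$ converges to $x^*$. Let $I=Supp(x^* )$, $K=\|x^*\|_0$ and $e=\min_{i\in I}|x_i^*|$. Then $x^*$ is a strict local minimizer of $T_\lambda$ if either of the following holds: (a) $\lambda_{\min}(A_I^TA_I)>0$ and $0<\lambda<\frac{\lambda_{\min}(A_I^TA_I)\,e^{2-q}}{q(1-q)}$; (b) $\frac{\lambda_{\min}(A_I^TA_I)}{\max_i\|A_i\|_2^2}>\frac q2$ and $\frac{q}{2\lambda_{\min}(A_I^TA_I)}<\mu<\frac{1}{\max_i\|A_i\|_2^2}$.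
   Context: Let $A\in\mathbf{R}^{m\times N}$ have columns $A_1,\dots,A_N$, $y\in\mathbf{R}^m$, $\lambda>0$, $q\in(0,1)$, and $T_\lambda(x)=\frac12\|Ax-y\|_2^2+\lambda\sum_{i=1}^N|x_i|^q$. For a step size $\mu>0$ set $\tau_{\mu,q}=\frac{2-q}{2-2q}(2\lambda\mu(1-q))^{\frac{1}{2-q}}$ and $\eta_{\mu,q}=(2\lambda\mu(1-q))^{\frac{1}{2-q}}$. For $z\in\mathbf{R}$ let $prox_{\mu,\lambda|\cdot|^q}(z)=\arg\min_{v\in\mathbf{R}}\{\frac{(z-v)^2}{2\mu}+\lambda|v|^q\}$ (a single point when $|z|\neq\tau_{\mu,q}$). Define $\mathcal{T}(z,w)$ as the unique element of $prox_{\mu,\lambda|\cdot|^q}(z)$ if $|z|\neq\tau_{\mu,q}$, and, if $|z|=\tau_{\mu,q}$, as $sgn(z)\eta_{\mu,q}$ when $w\neq0$ and $0$ when $w=0$. GAITA: given $x^0\in\mathbf{R}^N$, for $n=0,1,2,\dots$ let $i=(n\bmod N)+1$, $z_i^n=x_i^n-\mu A_i^T(Ax^n-y)$, $x_i^{n+1}=\mathcal{T}(z_i^n,x_i^n)$, $x_j^{n+1}=x_j^n$ for $j\neq i$. $Supp(x)=\{i:x_i\neq0\}$. $A_I$ is the submatrix of $A$ with columns indexed by $I$, and $\lambda_{\min}(M)$ denotes the smallest eigenvalue of a symmetric matrix $M$. *)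

theory Defs
  imports Complex_Main "Jordan_Normal_Form.Char_Poly" "Jordan_Normal_Form.DL_Submatrix"
begin

definition T_obj :: "real mat \<Rightarrow> real vec \<Rightarrow> real \<Rightarrow> real \<Rightarrow> real vec \<Rightarrow> real" where
  "T_obj A y lam q x =
     (1/2) * (\<Sum>j<dim_row A. ((A *\<^sub>v x) $ j - y $ j)^2)
     + lam * (\<Sum>i<dim_col A. \<bar>x $ i\<bar> powr q)"

definition col_sqnorm :: "real mat \<Rightarrow> nat \<Rightarrow> real" where
  "col_sqnorm A i = (\<Sum>j<dim_row A. (A $$ (j, i))^2)"

definition Lmax :: "real mat \<Rightarrow> real" where
  "Lmax A = Max (col_sqnorm A ` {..<dim_col A})"

definition tau :: "real \<Rightarrow> real \<Rightarrow> real \<Rightarrow> real" where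
  "tau lam mu q = (2 - q) / (2 - 2*q) * (2*lam*mu*(1-q)) powr (1/(2-q))"

definition eta :: "real \<Rightarrow> real \<Rightarrow> real \<Rightarrow> real" where
  "eta lam mu q = (2*lam*mu*(1-q)) powr (1/(2-q))"

definition prox :: "real \<Rightarrow> real \<Rightarrow> real \<Rightarrow> real \<Rightarrow> real set" where
  "prox mu lam q z = {v. \<forall>w. (z - v)^2 / (2*mu) + lam * \<bar>v\<bar> powr q
                              \<le> (z - w)^2 / (2*mu) + lam * \<bar>w\<bar> powr q}"

definition thr :: "real \<Rightarrow> real \<Rightarrow> real \<Rightarrow> real \<Rightarrow> real \<Rightarrow> real" where
  "thr mu lam q z w =
     (if \<bar>z\<bar> \<noteq> tau lam mu q then (THE v. v \<in> prox mu lam q z)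
      else if w \<noteq> 0 then sgn z * eta lam mu q else 0)"

(* one GAITA step at iteration n (coordinate i = n mod N, 0-based) *)
definition gaita_step :: "real mat \<Rightarrow> real vec \<Rightarrow> real \<Rightarrow> real \<Rightarrow> real \<Rightarrow> nat \<Rightarrow> real vec \<Rightarrow> real vec" where
  "gaita_step A y lam q mu n x =
     (let N = dim_col A; i = n mod N;
          z = x $ i - mu * (col A i \<bullet> (A *\<^sub>v x - y))
      in vec N (\<lambda>j. if j = i then thr mu lam q z (x $ i) else x $ j))"

definition lambda_min :: "real mat \<Rightarrow> real" where
  "lambda_min M = Min {k. eigenvalue M k}"

definition supp :: "real vec \<Rightarrow> nat set" where
  "supp x = {i. i < dim_vec x \<and> x $ i \<noteq> 0}"

definition strict_local_min :: "nat \<Rightarrow> (real vec \<Rightarrow> real) \<Rightarrow> real vec \<Rightarrow> bool" where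
  "strict_local_min N f xs \<longleftrightarrow>
     (\<exists>\<delta>>0. \<forall>x. dim_vec x = N \<and> x \<noteq> xs \<and>
        sqrt (\<Sum>i<N. (x $ i - xs $ i)^2) < \<delta> \<longrightarrow> f xs < f x)"

end

theory Submission
  imports Defs "HOL-Analysis.Function_Topology"
begin

definition Fp :: "real \<Rightarrow> real \<Rightarrow> real \<Rightarrow> real \<Rightarrow> real \<Rightarrow> real" where
  "Fp mu lam q z v = (z - v)^2 / (2*mu) + lam * \<bar>v\<bar> powr q"

lemma prox_iff: "v \<in> prox mu lam q z \<longleftrightarrow> (\<forall>w. Fp mu lam q z v \<le> Fp mu lam q z w)"
  unfolding prox_def Fp_def by simp

context
  fixes mu lam q :: real
  assumes mu: "mu > 0" and lam: "lam > 0" and q0: "0 < q" and q1: "q < 1"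
begin

lemma eta_pos: "eta lam mu q > 0"
  unfolding eta_def using mu lam q1 by simp

lemma eta_pow: "eta lam mu q powr (2 - q) = 2*lam*mu*(1-q)"
  unfolding eta_def using mu lam q1 by (simp add: powr_powr)

lemma tau_eq: "tau lam mu q = eta lam mu q + mu*lam*q * eta lam mu q powr (q - 1)"
proof -
  define e where "e = eta lam mu q"
  have e0: "e > 0" using eta_pos e_def by simp
  have "e powr (q - 1) * e powr (2 - q) = e" using e0 by (simp add: powr_add[symmetric])
  hence P: "e powr (q - 1) = e / (2*lam*mu*(1-q))" using eta_pow e_def mu lam q1
    by (simp add: field_simps)
  have M: "mu*lam*q * e powr (q - 1) = q * e / (2 - 2*q)" unfolding P using mu lam q1 by (simp add: field_simps)
  have T: "tau lam mu q = (2 - q) / (2 - 2*q) * e" unfolding tau_def e_def eta_def by simp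
  have "(2 - q) / (2 - 2*q) * e = e + q * e / (2 - 2*q)" using q1 by (simp add: field_simps)
  thus ?thesis unfolding e_def[symmetric] T M .
qed

lemma tau_pos: "tau lam mu q > 0"
  using tau_eq eta_pos mu lam q0 by (simp add: add_pos_nonneg)

lemma prox_neg: "v \<in> prox mu lam q z \<Longrightarrow> -v \<in> prox mu lam q (-z)"
  unfolding prox_iff Fp_def
proof
  fix w assume H: "\<forall>w. (z - v)\<^sup>2 / (2 * mu) + lam * \<bar>v\<bar> powr q \<le> (z - w)\<^sup>2 / (2 * mu) + lam * \<bar>w\<bar> powr q"
  from H[rule_format, of "-w"] show "(- z - - v)\<^sup>2 / (2 * mu) + lam * \<bar>- v\<bar> powr q
         \<le> (- z - w)\<^sup>2 / (2 * mu) + lam * \<bar>w\<bar> powr q"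
    by (simp add: power2_eq_square algebra_simps)
qed

lemma prox_exists: "\<exists>v. v \<in> prox mu lam q z"
proof -
  define R where "R = 2*\<bar>z\<bar> + 1"
  have cont: "continuous_on {-R..R} (Fp mu lam q z)"
    unfolding Fp_def using q0
    using mu by (intro continuous_intros continuous_on_powr') auto
  have "{-R..R} \<noteq> {}" unfolding R_def by simp
  then obtain v where v: "v \<in> {-R..R}" and vmin: "\<forall>w\<in>{-R..R}. Fp mu lam q z v \<le> Fp mu lam q z w"
    using continuous_attains_inf[OF compact_Icc _ cont] by blast
  have "Fp mu lam q z v \<le> Fp mu lam q z w" for w
  proof (cases "w \<in> {-R..R}")
    case True thus ?thesis using vmin by auto
  next
    case False
    hence "\<bar>w\<bar> > R" by auto
    hence "\<bar>z - w\<bar> > \<bar>z\<bar>" unfolding R_def by linarith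
    hence "(z - w)^2 > z^2" by (metis abs_ge_zero power2_abs power_strict_mono zero_less_numeral)
    hence "z^2/(2*mu) < (z - w)^2/(2*mu)" using mu by (simp add: divide_strict_right_mono)
    moreover have "lam * \<bar>w\<bar> powr q \<ge> 0" using lam by simp
    ultimately have "Fp mu lam q z 0 < Fp mu lam q z w" unfolding Fp_def using q0 by simp
    moreover have "0 \<in> {-R..R}" unfolding R_def by simp
    ultimately show ?thesis using vmin by fastforce
  qed
  thus ?thesis unfolding prox_iff by blast
qed

lemma prox_sign: assumes "v \<in> prox mu lam q z" "v \<noteq> 0" shows "z * v > 0"
proof (rule ccontr)
  assume "\<not> z * v > 0"
  hence "z * v < 0 \<or> z = 0" using assms(2) by (metis linorder_neqE_linordered_idom mult_eq_0_iff)
  hence "(z + v)^2 < (z - v)^2 \<or> z = 0" 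
    by (auto simp: power2_eq_square algebra_simps)
  moreover have A1: "Fp mu lam q z v \<le> Fp mu lam q z (-v)" and A2: "Fp mu lam q z v \<le> Fp mu lam q z 0"
    using assms(1) unfolding prox_iff by auto
  moreover have "lam * \<bar>v\<bar> powr q > 0" using lam assms(2) by simp
  moreover have "v^2/(2*mu) > 0" using mu assms(2) by simp
  ultimately show False
  proof (elim disjE)
    assume "(z + v)^2 < (z - v)^2"
    hence "(z + v)^2/(2*mu) < (z - v)^2/(2*mu)" using mu by (simp add: divide_strict_right_mono)
    thus False using A1 unfolding Fp_def by simp
  next
    assume "z = 0"
    thus False using A2 \<open>lam * \<bar>v\<bar> powr q > 0\<close> \<open>v^2/(2*mu) > 0\<close> unfolding Fp_def by simp
  qed
qed

lemma prox_stat_pos: assumes "v \<in> prox mu lam q z" "v > 0"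
  shows "v - z + mu*lam*q * v powr (q - 1) = 0"
proof -
  define G where "G w = (z - w)^2 / (2*mu) + lam * w powr q" for w
  have D: "(G has_real_derivative ((v - z)/mu + lam * (q * v powr (q - 1)))) (at v)"
    unfolding G_def using assms(2) mu
    by (auto intro!: derivative_eq_intros simp: power2_eq_square field_simps)
  have "\<forall>y. \<bar>v - y\<bar> < v \<longrightarrow> G v \<le> G y"
  proof (intro allI impI)
    fix y assume "\<bar>v - y\<bar> < v"
    hence "y > 0" by linarith
    thus "G v \<le> G y" using assms(1) unfolding prox_iff Fp_def G_def
      using assms(2) by (metis abs_of_pos)
  qed
  from DERIV_local_min[OF D assms(2) this]
  have "(v - z)/mu + lam * (q * v powr (q - 1)) = 0" .
  thus ?thesis using mu by (simp add: field_simps)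
qed

lemma prox_eta_pos: assumes "v \<in> prox mu lam q z" "v > 0"
  shows "v \<ge> eta lam mu q"
proof -
  define P where "P = v powr (q - 1)"
  have P0: "P > 0" unfolding P_def using assms(2) by simp
  have st: "z = v + mu*lam*q * P" using prox_stat_pos[OF assms] unfolding P_def by simp
  have "Fp mu lam q z v \<le> Fp mu lam q z 0" using assms(1) unfolding prox_iff by auto
  hence "(z - v)^2 / (2*mu) + lam * v powr q \<le> z^2/(2*mu)" using assms(2) unfolding Fp_def by simp
  hence "2*mu*((z - v)^2 / (2*mu) + lam * v powr q) \<le> 2*mu*(z^2/(2*mu))" using mu by (intro mult_left_mono) auto
  moreover have "2*mu*((z - v)^2/(2*mu) + lam*v powr q) = 2*mu*((z - v)^2/(2*mu)) + 2*mu*(lam * v powr q)" by (rule distrib_left)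
  moreover have "2*mu*((z - v)^2/(2*mu)) = (z - v)^2" "2*mu*(z^2/(2*mu)) = z^2" using mu by simp_all
  moreover have "2*mu*(lam * v powr q) = 2*mu*lam*v powr q" by simp
  ultimately have H: "(z - v)^2 + 2*mu*lam * v powr q \<le> z^2" by linarith
  have "v powr q = v powr (1 + (q - 1))" by simp
  also have "\<dots> = v powr 1 * v powr (q - 1)" by (rule powr_add)
  also have "\<dots> = v * P" using assms(2) by (simp add: P_def)
  finally have vq: "v powr q = v * P" .
  have "(z - v)^2 + 2*mu*lam * v powr q - z^2 = v * (2*mu*lam*(1 - q) * P - v)"
    unfolding vq st by (simp add: power2_eq_square algebra_simps)
  hence "v * (2*mu*lam*(1 - q) * P - v) \<le> 0" using H by linarith
  hence A: "2*mu*lam*(1 - q) * P \<le> v" using assms(2) by (simp add: mult_le_0_iff)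
  have B: "P * v powr (2 - q) = v" unfolding P_def using assms(2) by (simp add: powr_add[symmetric])
  have "P * (2*mu*lam*(1-q)) \<le> P * v powr (2 - q)" using A B by (simp add: mult.commute)
  hence "2*mu*lam*(1-q) \<le> v powr (2 - q)" using P0 by simp
  hence "(2*lam*mu*(1-q)) powr (1/(2-q)) \<le> (v powr (2-q)) powr (1/(2-q))"
    using mu lam q1 by (intro powr_mono2) (auto simp: algebra_simps)
  also have "\<dots> = v" using assms(2) q1 by (simp add: powr_powr)
  finally show ?thesis unfolding eta_def .
qed

lemma prox_zero_tau: assumes "v \<in> prox mu lam q z" "v > 0" "0 \<in> prox mu lam q z"
  shows "z = tau lam mu q"
proof -
  define P where "P = v powr (q - 1)"
  have P0: "P > 0" unfolding P_def using assms(2) by simp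
  have st: "z = v + mu*lam*q * P" using prox_stat_pos[OF assms(1,2)] unfolding P_def by simp
  have "Fp mu lam q z v = Fp mu lam q z 0" using assms(1,3) unfolding prox_iff by (meson order_antisym)
  hence "(z - v)^2 / (2*mu) + lam * v powr q = z^2/(2*mu)" using assms(2) q0 unfolding Fp_def by simp
  hence "2*mu*((z - v)^2 / (2*mu) + lam * v powr q) = 2*mu*(z^2/(2*mu))" by simp
  moreover have "2*mu*((z - v)^2/(2*mu) + lam*v powr q) = 2*mu*((z - v)^2/(2*mu)) + 2*mu*(lam * v powr q)" by (rule distrib_left)
  moreover have "2*mu*((z - v)^2/(2*mu)) = (z - v)^2" "2*mu*(z^2/(2*mu)) = z^2" using mu by simp_all
  moreover have "2*mu*(lam * v powr q) = 2*mu*lam*v powr q" by simp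
  ultimately have H: "(z - v)^2 + 2*mu*lam * v powr q = z^2" by linarith
  have "v powr q = v powr (1 + (q - 1))" by simp
  also have "\<dots> = v powr 1 * v powr (q - 1)" by (rule powr_add)
  also have "\<dots> = v * P" using assms(2) by (simp add: P_def)
  finally have vq: "v powr q = v * P" .
  have "(z - v)^2 + 2*mu*lam * v powr q - z^2 = v * (2*mu*lam*(1 - q) * P - v)"
    unfolding vq st by (simp add: power2_eq_square algebra_simps)
  hence "v * (2*mu*lam*(1 - q) * P - v) = 0" using H by linarith
  hence A: "2*mu*lam*(1 - q) * P = v" using assms(2) by simp
  have B: "P * v powr (2 - q) = v" unfolding P_def using assms(2) by (simp add: powr_add[symmetric])
  have "P * (2*mu*lam*(1-q)) = P * v powr (2 - q)" using A B by (simp add: mult.commute)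
  hence "2*mu*lam*(1-q) = v powr (2 - q)" using P0 by simp
  hence E: "v powr (2 - q) = 2*lam*mu*(1-q)" by (simp add: mult_ac)
  have "(v powr (2-q)) powr (1/(2-q)) = v" using assms(2) q1 by (simp add: powr_powr)
  hence ve: "v = eta lam mu q" unfolding eta_def E by simp
  show ?thesis using st tau_eq unfolding P_def ve by simp
qed

lemma prox_unique_pos: assumes "v \<in> prox mu lam q z" "w \<in> prox mu lam q z" "0 < v" "v < w"
  shows False
proof -
  define c where "c = mu*lam*q"
  define G where "G s = s + c * s powr (q - 1)" for s
  have Gv: "G v = z" using prox_stat_pos[OF assms(1,3)] unfolding G_def c_def by simp
  have Gw: "G w = z" using prox_stat_pos[OF assms(2)] assms unfolding G_def c_def by simp
  have ev: "eta lam mu q \<le> v" using prox_eta_pos[OF assms(1,3)] .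
  have "G v < G w"
  proof (rule DERIV_pos_imp_increasing[OF assms(4)])
    fix s assume s: "v \<le> s" "s \<le> w"
    have s0: "s > 0" using s assms(3) by simp
    have D: "(G has_real_derivative (1 + c * ((q - 1) * s powr (q - 1 - 1)))) (at s)"
      unfolding G_def using s0 by (auto intro!: derivative_eq_intros)
    have "s powr (q - 2) \<le> eta lam mu q powr (q - 2)"
      using powr_mono2'[of "q - 2" "eta lam mu q" s] q1 eta_pos ev s by simp
    also have "\<dots> = eta lam mu q powr (-(2 - q))" by simp
    also have "\<dots> = inverse (eta lam mu q powr (2 - q))" by (rule powr_minus)
    also have "\<dots> = 1 / (2*lam*mu*(1-q))" unfolding eta_pow by (simp add: inverse_eq_divide)
    finally have "s powr (q - 2) \<le> 1 / (2*lam*mu*(1-q))" .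
    hence "c * (1 - q) * s powr (q - 2) \<le> c * (1 - q) * (1 / (2*lam*mu*(1-q)))"
      unfolding c_def using mu lam q0 q1 by (intro mult_left_mono) auto
    also have "\<dots> = q / 2" unfolding c_def using mu lam q1 by (simp add: field_simps)
    finally have "c * (1 - q) * s powr (q - 2) < 1" using q1 by simp
    hence "1 + c * ((q - 1) * s powr (q - 1 - 1)) > 0" by (simp add: algebra_simps)
    thus "\<exists>y. (G has_real_derivative y) (at s) \<and> 0 < y" using D by blast
  qed
  thus False using Gv Gw by simp
qed

lemma prox_unique: assumes "\<bar>z\<bar> \<noteq> tau lam mu q" "v \<in> prox mu lam q z" "w \<in> prox mu lam q z"
  shows "v = w"
proof -
  have pos: "v' = w'" if "\<bar>z'\<bar> \<noteq> tau lam mu q" "v' \<in> prox mu lam q z'" "w' \<in> prox mu lam q z'" "z' > 0" for v' w' z'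
  proof -
    have nn: "u \<ge> 0" if "u \<in> prox mu lam q z'" for u
      using prox_sign[OF that] \<open>z' > 0\<close> by (cases "u = 0") (auto simp: zero_less_mult_iff)
    show ?thesis
    proof (cases "v' = 0 \<or> w' = 0")
      case True
      thus ?thesis using prox_zero_tau that nn
        by (metis abs_of_pos less_eq_real_def)
    next
      case False
      hence "v' > 0" "w' > 0" using nn that by (auto simp: less_le)
      thus ?thesis using prox_unique_pos that by (metis linorder_neqE_linordered_idom)
    qed
  qed
  show ?thesis
  proof (cases "z = 0")
    case True
    have "u = 0" if "u \<in> prox mu lam q z" for u using prox_sign[OF that] True by fastforce
    thus ?thesis using assms by auto
  next
    case False
    show ?thesis
    proof (cases "z > 0")
      case True thus ?thesis using pos assms by blast
    next
      case False
      hence "-z > 0" using \<open>z \<noteq> 0\<close> by simp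
      hence "-v = -w" using pos[of "-z" "-v" "-w"] prox_neg assms by simp
      thus ?thesis by simp
    qed
  qed
qed

lemma thr_facts: assumes "thr mu lam q z w \<noteq> 0"
  shows "\<bar>thr mu lam q z w\<bar> \<ge> eta lam mu q \<and>
         thr mu lam q z w - z + mu*lam*q * sgn (thr mu lam q z w) * \<bar>thr mu lam q z w\<bar> powr (q - 1) = 0"
proof (cases "\<bar>z\<bar> = tau lam mu q")
  case False
  define t where "t = thr mu lam q z w"
  have "\<exists>!v. v \<in> prox mu lam q z" using prox_exists prox_unique[OF False] by blast
  moreover have "t = (THE v. v \<in> prox mu lam q z)" unfolding t_def thr_def using False by simp
  ultimately have tp: "t \<in> prox mu lam q z" using theI' by metis
  have t0: "t \<noteq> 0" using assms t_def by simp
  show ?thesis unfolding t_def[symmetric]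
  proof (cases "t > 0")
    case True
    thus "eta lam mu q \<le> \<bar>t\<bar> \<and> t - z + mu * lam * q * sgn t * \<bar>t\<bar> powr (q - 1) = 0"
      using prox_eta_pos[OF tp True] prox_stat_pos[OF tp True] by simp
  next
    case False
    hence tn: "-t > 0" using t0 by simp
    have tp': "-t \<in> prox mu lam q (-z)" using prox_neg[OF tp] .
    show "eta lam mu q \<le> \<bar>t\<bar> \<and> t - z + mu * lam * q * sgn t * \<bar>t\<bar> powr (q - 1) = 0"
      using prox_eta_pos[OF tp' tn] prox_stat_pos[OF tp' tn] tn by simp
  qed
next
  case True
  hence z0: "z \<noteq> 0" using tau_pos by auto
  have w0: "w \<noteq> 0" using assms True unfolding thr_def by (auto split: if_splits)
  have t: "thr mu lam q z w = sgn z * eta lam mu q" using True w0 unfolding thr_def by simp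
  have "sgn z * eta lam mu q - z + mu*lam*q * sgn (sgn z * eta lam mu q) * \<bar>sgn z * eta lam mu q\<bar> powr (q - 1)
      = sgn z * (eta lam mu q + mu*lam*q * eta lam mu q powr (q - 1) - \<bar>z\<bar>)"
    using z0 eta_pos by (cases "z > 0") (auto simp: sgn_mult abs_mult algebra_simps)
  also have "\<dots> = 0" using True tau_eq by simp
  finally show ?thesis unfolding t using z0 eta_pos by (simp add: abs_mult)
qed

end

lemma taylor_powr: fixes a d t q :: real
  assumes q0: "0 < q" and q1: "q < 1" and d: "0 < d" "d < a" and t: "\<bar>t - a\<bar> \<le> d"
  shows "t powr q \<ge> a powr q + q * a powr (q - 1) * (t - a) - q*(1-q)/2 * (a - d) powr (q - 2) * (t - a)^2"
proof (cases "t = a")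
  case True thus ?thesis by simp
next
  case False
  define D where "D m s = (if m = 0 then s powr q else if m = 1 then q * s powr (q - 1) else q * (q - 1) * s powr (q - 2))" for m :: nat and s :: real
  have der: "\<forall>m s. m < 2 \<and> a - d \<le> s \<and> s \<le> a + d \<longrightarrow> (D m has_real_derivative D (Suc m) s) (at s)"
  proof (intro allI impI)
    fix m :: nat and s :: real assume H: "m < 2 \<and> a - d \<le> s \<and> s \<le> a + d"
    hence s0: "s > 0" using d by simp
    show "(D m has_real_derivative D (Suc m) s) (at s)"
    proof (cases "m = 0")
      case True
      thus ?thesis unfolding D_def[abs_def] using s0 by (auto intro!: derivative_eq_intros)
    next
      case False
      hence "m = 1" using H by simp
      thus ?thesis unfolding D_def[abs_def] using s0
        by (auto intro!: derivative_eq_intros simp: algebra_simps)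
    qed
  qed
  obtain \<xi> where xi: "(if t < a then t < \<xi> \<and> \<xi> < a else a < \<xi> \<and> \<xi> < t)"
    and eq: "D 0 t = (\<Sum>m<2. D m a / fact m * (t - a) ^ m) + D 2 \<xi> / fact 2 * (t - a) ^ 2"
    using Taylor[of 2 D "D 0" "a - d" "a + d" a t] der False t d
    by (auto simp: abs_le_iff) 
  have x0: "\<xi> \<ge> a - d" using xi t by (auto split: if_splits simp: abs_le_iff)
  have "\<xi> powr (q - 2) \<le> (a - d) powr (q - 2)"
    using powr_mono2'[of "q - 2" "a - d" \<xi>] q1 d x0 by simp
  hence "q * (1 - q) * \<xi> powr (q - 2) * (t - a)^2 \<le> q * (1 - q) * (a - d) powr (q - 2) * (t - a)^2"
    using q0 q1 by (intro mult_right_mono mult_left_mono) auto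
  moreover have D2: "D 2 \<xi> = - (q * (1 - q) * \<xi> powr (q - 2))" unfolding D_def by (simp add: algebra_simps)
  moreover have S: "(\<Sum>m<2. D m a / fact m * (t - a) ^ m) = a powr q + q * a powr (q - 1) * (t - a)"
    unfolding D_def by (simp add: numeral_2_eq_2)
  moreover have "D 0 t = t powr q" unfolding D_def by simp
  ultimately have "t powr q = a powr q + q * a powr (q - 1) * (t - a) - (q * (1 - q) * \<xi> powr (q - 2) * (t - a)^2) / 2"
    using eq by simp
  moreover have "q*(1-q)/2 * (a - d) powr (q - 2) * (t - a)^2 = (q * (1 - q) * (a - d) powr (q - 2) * (t - a)^2) / 2"
    by simp
  ultimately show ?thesis using \<open>q * (1 - q) * \<xi> powr (q - 2) * (t - a)^2 \<le> q * (1 - q) * (a - d) powr (q - 2) * (t - a)^2\<close>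
    by linarith
qed

lemma taylor_abs_powr: fixes a d t q :: real
  assumes q0: "0 < q" and q1: "q < 1" and d: "0 < d" "d < \<bar>a\<bar>" and t: "\<bar>t - a\<bar> \<le> d"
  shows "\<bar>t\<bar> powr q \<ge> \<bar>a\<bar> powr q + q * sgn a * \<bar>a\<bar> powr (q - 1) * (t - a) - q*(1-q)/2 * (\<bar>a\<bar> - d) powr (q - 2) * (t - a)^2"
proof (cases "a > 0")
  case True
  hence "t > 0" using d t by (auto simp: abs_le_iff)
  thus ?thesis using taylor_powr[OF q0 q1 d(1) _ t] d True by simp
next
  case False
  hence a0: "a < 0" using d by auto
  hence "t < 0" using d t by (auto simp: abs_le_iff)
  have "\<bar>-t - (-a)\<bar> \<le> d" using t by simp
  from taylor_powr[OF q0 q1 d(1) _ this] d a0 \<open>t < 0\<close>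
  show ?thesis by (simp add: power2_commute algebra_simps)
qed


lemma compact_box: "compact {u :: nat \<Rightarrow> real. \<forall>l. u l \<in> (if l < k then {-1..1} else {0})}"
proof -
  have "compactin (product_topology (\<lambda>i. euclidean) UNIV) (PiE UNIV (\<lambda>l. if l < k then {-1..1::real} else {0}))"
    by (subst compactin_PiE) (auto simp: compactin_euclidean_iff)
  moreover have "PiE UNIV (\<lambda>l. if l < k then {-1..1::real} else {0}) = {u. \<forall>l. u l \<in> (if l < k then {-1..1} else {0})}"
    by (auto simp: PiE_def Pi_def)
  ultimately show ?thesis by (simp add: euclidean_product_topology compactin_euclidean_iff)
qed


definition Bu :: "real mat \<Rightarrow> (nat \<Rightarrow> real) \<Rightarrow> nat \<Rightarrow> real" where
  "Bu B u j = (\<Sum>l<dim_col B. B $$ (j, l) * u l)"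
definition Qf :: "real mat \<Rightarrow> (nat \<Rightarrow> real) \<Rightarrow> real" where
  "Qf B u = (\<Sum>j<dim_row B. (Bu B u j)^2)"
definition nrm :: "nat \<Rightarrow> (nat \<Rightarrow> real) \<Rightarrow> real" where
  "nrm k u = (\<Sum>l<k. (u l)^2)"

lemma Bu_lin: "Bu B (\<lambda>l. u l + t * w l) j = Bu B u j + t * Bu B w j"
  unfolding Bu_def by (simp add: algebra_simps sum.distrib sum_distrib_left)

lemma Bu_scale: "Bu B (\<lambda>l. c * u l) j = c * Bu B u j"
  unfolding Bu_def by (simp add: algebra_simps sum_distrib_left)

lemma Qf_scale: "Qf B (\<lambda>l. c * u l) = c^2 * Qf B u"
  unfolding Qf_def Bu_scale by (simp add: power_mult_distrib sum_distrib_left)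

lemma nrm_scale: "nrm k (\<lambda>l. c * u l) = c^2 * nrm k u"
  unfolding nrm_def by (simp add: power_mult_distrib sum_distrib_left)

lemma Qf_lin: "Qf B (\<lambda>l. u l + t * w l) = Qf B u + 2 * t * (\<Sum>j<dim_row B. Bu B u j * Bu B w j) + t^2 * Qf B w"
  unfolding Qf_def Bu_lin by (simp add: power2_eq_square algebra_simps sum.distrib sum_distrib_left)

lemma nrm_lin: "nrm k (\<lambda>l. u l + t * w l) = nrm k u + 2 * t * (\<Sum>l<k. u l * w l) + t^2 * nrm k w"
  unfolding nrm_def by (simp add: power2_eq_square algebra_simps sum.distrib sum_distrib_left)

lemma Qf_nonneg: "Qf B u \<ge> 0" unfolding Qf_def by (simp add: sum_nonneg)
lemma nrm_nonneg: "nrm k u \<ge> 0" unfolding nrm_def by (simp add: sum_nonneg)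

lemma Qf_cong: "(\<And>l. l < dim_col B \<Longrightarrow> u l = w l) \<Longrightarrow> Qf B u = Qf B w"
  unfolding Qf_def Bu_def by simp
lemma nrm_cong: "(\<And>l. l < k \<Longrightarrow> u l = w l) \<Longrightarrow> nrm k u = nrm k w"
  unfolding nrm_def by simp

lemma Qf_cont: "continuous_on UNIV (Qf B)"
  unfolding Qf_def Bu_def by (intro continuous_intros continuous_on_product_coordinates)
lemma nrm_cont: "continuous_on UNIV (nrm k)"
  unfolding nrm_def by (intro continuous_intros continuous_on_product_coordinates)

lemma quad_min_exists: assumes k: "dim_col B > 0"
  shows "\<exists>u0. nrm (dim_col B) u0 = 1 \<and> (\<forall>u. Qf B u \<ge> Qf B u0 * nrm (dim_col B) u)"
proof -
  define k where "k = dim_col B"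
  define S where "S = {u :: nat \<Rightarrow> real. \<forall>l. u l \<in> (if l < k then {-1..1} else {0})} \<inter> {u. nrm k u = 1}"
  have cS: "compact S" unfolding S_def
    by (intro compact_Int_closed compact_box closed_Collect_eq continuous_on_const nrm_cont[unfolded continuous_on_eq_continuous_at[OF open_UNIV]] )
  have sq: "(\<lambda>l. (if l = (0::nat) then 1 else 0::real)^2) = (\<lambda>l. if l = 0 then 1 else 0)" by auto
  have "(\<Sum>l<k. (if l = (0::nat) then 1 else 0::real)^2) = 1" unfolding sq using k k_def by simp
  hence "(\<lambda>l. if l = 0 then 1 else 0) \<in> S" unfolding S_def nrm_def using k k_def by auto
  hence nS: "S \<noteq> {}" by auto
  obtain u0 where u0: "u0 \<in> S" and min: "\<forall>u\<in>S. Qf B u0 \<le> Qf B u"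
    using continuous_attains_inf[OF cS nS continuous_on_subset[OF Qf_cont]] by blast
  have "Qf B u \<ge> Qf B u0 * nrm k u" for u
  proof (cases "nrm k u = 0")
    case True thus ?thesis using Qf_nonneg by simp
  next
    case False
    define s where "s = sqrt (nrm k u)"
    have s0: "s > 0" using False nrm_nonneg[of k u] unfolding s_def by simp
    have s2: "s^2 = nrm k u" unfolding s_def using nrm_nonneg by simp
    define w where "w l = (if l < k then u l / s else 0)" for l
    have nw: "nrm k w = 1"
    proof -
      have "nrm k w = nrm k (\<lambda>l. (1/s) * u l)" unfolding w_def by (rule nrm_cong) simp
      also have "\<dots> = (1/s)^2 * nrm k u" by (rule nrm_scale)
      finally show ?thesis using s2 s0 False by (simp add: power_divide)
    qed
    have "\<bar>w l\<bar> \<le> 1" for l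
    proof (cases "l < k")
      case True
      have "(w l)^2 \<le> nrm k w" unfolding nrm_def
        using True by (intro member_le_sum) auto
      hence "(w l)^2 \<le> 1^2" using nw by simp
      thus ?thesis using abs_le_square_iff[of "w l" 1] by simp
    qed (simp add: w_def)
    hence "\<forall>l. w l \<in> (if l < k then {-1..1} else {0})"
    proof (intro allI)
      fix l assume "\<And>l. \<bar>w l\<bar> \<le> 1"
      from this[of l] show "w l \<in> (if l < k then {-1..1} else {0})" by (auto simp: w_def abs_le_iff)
    qed
    hence "w \<in> S" unfolding S_def using nw by blast
    hence "Qf B u0 \<le> Qf B w" using min by blast
    also have "Qf B w = Qf B (\<lambda>l. (1/s) * u l)" unfolding w_def k_def by (rule Qf_cong) simp
    also have "\<dots> = (1/s)^2 * Qf B u" by (rule Qf_scale)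
    also have "\<dots> = Qf B u / s^2" by (simp add: power_divide)
    finally have "Qf B u0 * s^2 \<le> Qf B u" using s0 by (simp add: field_simps)
    thus ?thesis using s2 by simp
  qed
  moreover have "nrm k u0 = 1" using u0 unfolding S_def by simp
  ultimately show ?thesis unfolding k_def by blast
qed


lemma perturb_zero: fixes b c :: real
  assumes "\<And>t. 2 * t * b + t^2 * c \<ge> 0" shows "b = 0"
proof (rule ccontr)
  assume b: "b \<noteq> 0"
  have c: "c \<ge> 0" using assms[of 1] assms[of "-1"] by simp
  define d where "d = c + 1"
  have d: "d > 0" "c = d - 1" unfolding d_def using c by auto
  have "2 * (- b / d) * b + (- b / d)^2 * (d - 1) = - (b^2 * (d + 1) / d^2)"
    using d by (simp add: field_simps power2_eq_square) 
  also have "\<dots> < 0" using b d by simp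
  finally show False using assms[of "- b / d"] d by simp
qed

lemma eig_finite: assumes "(M :: real mat) \<in> carrier_mat k k" shows "finite {e. eigenvalue M e}"
proof -
  have "char_poly M \<noteq> 0" using degree_monic_char_poly[OF assms] by auto
  hence "finite {x. poly (char_poly M) x = 0}" by (rule poly_roots_finite)
  thus ?thesis using eigenvalue_root_char_poly[OF assms] by simp
qed

lemma rayleigh_lmin: assumes k: "dim_col B > 0"
  shows "Qf B u \<ge> lambda_min (transpose_mat B * B) * nrm (dim_col B) u"
proof -
  define k where "k = dim_col B"
  define m where "m = dim_row B"
  obtain u0 where n0: "nrm k u0 = 1" and mn: "\<And>u. Qf B u \<ge> Qf B u0 * nrm k u"
    using quad_min_exists[OF k] unfolding k_def by blast
  define r where "r = Qf B u0"
  have eqn: "(\<Sum>j<m. Bu B u0 j * B $$ (j, l)) = r * u0 l" if l: "l < k" for l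
  proof -
    define w where "w l' = (if l' = l then 1 else (0::real))" for l'
    have Bw: "Bu B w j = B $$ (j, l)" for j
    proof -
      have "Bu B w j = (\<Sum>la<k. if la = l then B $$ (j, l) else 0)" unfolding Bu_def w_def k_def
        by (rule sum.cong) auto
      thus ?thesis using l by simp
    qed
    have sw: "(\<Sum>l'<k. u0 l' * w l') = u0 l"
    proof -
      have "(\<Sum>l'<k. u0 l' * w l') = (\<Sum>l'<k. if l' = l then u0 l else 0)" unfolding w_def
        by (rule sum.cong) auto
      thus ?thesis using l by simp
    qed
    define b where "b = (\<Sum>j<m. Bu B u0 j * B $$ (j, l)) - r * u0 l"
    have "2 * t * b + t^2 * (Qf B w - r * nrm k w) \<ge> 0" for t
    proof -
      have "Qf B (\<lambda>l'. u0 l' + t * w l') - r * nrm k (\<lambda>l'. u0 l' + t * w l') \<ge> 0"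
        using mn unfolding r_def by (simp add: algebra_simps)
      thus ?thesis unfolding Qf_lin nrm_lin b_def sw using n0 Bw unfolding m_def r_def
        by (simp add: algebra_simps)
    qed
    hence "b = 0" by (rule perturb_zero)
    thus ?thesis unfolding b_def by simp
  qed
  define M where "M = transpose_mat B * B"
  have Mc: "M \<in> carrier_mat k k" unfolding M_def k_def carrier_mat_def by simp
  define v where "v = vec k u0"
  have "v \<noteq> 0\<^sub>v k"
  proof
    assume "v = 0\<^sub>v k"
    hence "\<And>l. l < k \<Longrightarrow> u0 l = 0" unfolding v_def by (metis index_vec index_zero_vec(1))
    hence "nrm k u0 = 0" unfolding nrm_def by simp
    thus False using n0 by simp
  qed
  moreover have "M *\<^sub>v v = r \<cdot>\<^sub>v v"
  proof (rule eq_vecI)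
    show "dim_vec (M *\<^sub>v v) = dim_vec (r \<cdot>\<^sub>v v)" using Mc unfolding v_def by simp
    fix l assume "l < dim_vec (r \<cdot>\<^sub>v v)"
    hence l: "l < k" unfolding v_def by simp
    have "(M *\<^sub>v v) $ l = (\<Sum>l'<k. (\<Sum>j<m. B $$ (j, l) * B $$ (j, l')) * u0 l')"
      using l unfolding M_def v_def k_def m_def
      by (simp add: scalar_prod_def atLeast0LessThan)
    also have "\<dots> = (\<Sum>j<m. Bu B u0 j * B $$ (j, l))"
      unfolding Bu_def k_def by (simp add: sum_distrib_left sum_distrib_right sum.swap[of _ "{..<m}"] algebra_simps)
    also have "\<dots> = r * u0 l" using eqn l by simp
    finally show "(M *\<^sub>v v) $ l = (r \<cdot>\<^sub>v v) $ l" using l unfolding v_def by simp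
  qed
  moreover have "v \<in> carrier_vec k" unfolding v_def by simp
  ultimately have "eigenvalue M r" unfolding eigenvalue_def eigenvector_def using Mc by auto
  hence "lambda_min M \<le> r" unfolding lambda_min_def using eig_finite[OF Mc] by (simp add: Min_le)
  hence "lambda_min M * nrm k u \<le> r * nrm k u" using nrm_nonneg by (simp add: mult_right_mono)
  also have "\<dots> \<le> Qf B u" using mn unfolding r_def .
  finally show ?thesis unfolding M_def k_def .
qed


lemma pick_image: assumes "finite I" shows "inj_on (pick I) {..<card I}" "pick I ` {..<card I} = I"
proof -
  show inj: "inj_on (pick I) {..<card I}"
  proof (rule inj_onI)
    fix a b assume "a \<in> {..<card I}" "b \<in> {..<card I}" "pick I a = pick I b"
    thus "a = b" using pick_mono[of _ I] by (metis lessThan_iff linorder_neqE_nat less_irrefl)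
  qed
  have sub: "pick I ` {..<card I} \<subseteq> I" using pick_in_set by auto
  have "card (pick I ` {..<card I}) = card I" using card_image[OF inj] by simp
  thus "pick I ` {..<card I} = I" using card_subset_eq[OF assms sub] by simp
qed

lemma rayleigh_supp: fixes A :: "real mat"
  assumes I: "I \<subseteq> {..<dim_col A}" "I \<noteq> {}"
    and h: "\<And>l. l \<notin> I \<Longrightarrow> h l = 0"
  shows "(\<Sum>j<dim_row A. (\<Sum>l<dim_col A. A $$ (j, l) * h l)^2)
      \<ge> lambda_min (transpose_mat (submatrix A UNIV I) * submatrix A UNIV I) * (\<Sum>l\<in>I. (h l)^2)"
proof -
  define B where "B = submatrix A UNIV I"
  have fI: "finite I" using I finite_subset by blast
  have cI: "{j. j < dim_col A \<and> j \<in> I} = I" using I by auto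
  have dc: "dim_col B = card I" unfolding B_def dim_submatrix cI ..
  have dr: "dim_row B = dim_row A" unfolding B_def dim_submatrix by simp
  have kpos: "dim_col B > 0" unfolding dc using fI I by (simp add: card_gt_0_iff)
  define u where "u l = h (pick I l)" for l
  have Bij: "B $$ (j, l) = A $$ (j, pick I l)" if "j < dim_row A" "l < card I" for j l
    unfolding B_def using submatrix_index[of j A UNIV l I] that cI pick_UNIV by simp
  have Bu_eq: "Bu B u j = (\<Sum>l<dim_col A. A $$ (j, l) * h l)" if j: "j < dim_row A" for j
  proof -
    have "Bu B u j = (\<Sum>l<card I. A $$ (j, pick I l) * h (pick I l))"
      unfolding Bu_def dc u_def using Bij j by simp
    also have "\<dots> = (\<Sum>i\<in>I. A $$ (j, i) * h i)"
      using sum.reindex[OF pick_image(1)[OF fI], of "\<lambda>i. A $$ (j, i) * h i"] pick_image(2)[OF fI]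
      by simp
    also have "\<dots> = (\<Sum>l<dim_col A. A $$ (j, l) * h l)"
      using h I by (intro sum.mono_neutral_left) auto
    finally show ?thesis .
  qed
  have "Qf B u = (\<Sum>j<dim_row A. (\<Sum>l<dim_col A. A $$ (j, l) * h l)^2)"
    unfolding Qf_def dr using Bu_eq by simp
  moreover have "nrm (dim_col B) u = (\<Sum>l\<in>I. (h l)^2)"
    unfolding nrm_def dc u_def
    using sum.reindex[OF pick_image(1)[OF fI], of "\<lambda>i. (h i)^2"] pick_image(2)[OF fI] by simp
  ultimately show ?thesis using rayleigh_lmin[OF kpos, of u] unfolding B_def by simp
qed


lemma mulvec_expand: fixes A :: "real mat" assumes "dim_vec v = dim_col A" "j < dim_row A"
  shows "(A *\<^sub>v v) $ j = (\<Sum>l<dim_col A. A $$ (j, l) * v $ l)"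
  using assms by (simp add: scalar_prod_def atLeast0LessThan)

lemma grad_expand: fixes A :: "real mat"
  assumes "dim_vec v = dim_col A" "dim_vec y = dim_row A" "i < dim_col A"
  shows "col A i \<bullet> (A *\<^sub>v v - y) = (\<Sum>j<dim_row A. A $$ (j, i) * ((\<Sum>l<dim_col A. A $$ (j, l) * v $ l) - y $ j))"
  using assms by (simp add: scalar_prod_def atLeast0LessThan mulvec_expand)

lemma T_expand: fixes A :: "real mat"
  assumes "dim_vec v = dim_col A"
  shows "T_obj A y lam q v = (1/2) * (\<Sum>j<dim_row A. ((\<Sum>l<dim_col A. A $$ (j, l) * v $ l) - y $ j)^2)
     + lam * (\<Sum>i<dim_col A. \<bar>v $ i\<bar> powr q)"
proof -
  have "(\<Sum>j<dim_row A. ((A *\<^sub>v v) $ j - y $ j)^2) = (\<Sum>j<dim_row A. ((\<Sum>l<dim_col A. A $$ (j, l) * v $ l) - y $ j)^2)"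
    using assms by (intro sum.cong) (auto simp: scalar_prod_def atLeast0LessThan)
  thus ?thesis unfolding T_obj_def by simp
qed

lemma gaita_dims: assumes "dim_vec (x 0) = dim_col A" "\<And>n. x (Suc n) = gaita_step A y lam q mu n (x n)"
  shows "dim_vec (x n) = dim_col A"
  by (cases n) (simp_all add: assms gaita_step_def Let_def)

lemma limit_stationary:
  fixes A :: "real mat" and y :: "real vec" and lam q mu :: real
    and x :: "nat \<Rightarrow> real vec" and xstar :: "real vec"
  assumes N_pos: "dim_col A > 0"
    and y_dim: "dim_vec y = dim_row A"
    and lam_pos: "lam > 0" and q_pos: "0 < q" and q_lt1: "q < 1"
    and mu_pos: "0 < mu"
    and x0_dim: "dim_vec (x 0) = dim_col A"
    and gaita: "\<And>n. x (Suc n) = gaita_step A y lam q mu n (x n)"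
    and conv: "\<And>i. i < dim_col A \<Longrightarrow> (\<lambda>n. x n $ i) \<longlonglongrightarrow> xstar $ i"
    and i: "i < dim_col A" and xi: "xstar $ i \<noteq> 0"
  shows "\<bar>xstar $ i\<bar> \<ge> eta lam mu q \<and>
    (\<Sum>j<dim_row A. A $$ (j, i) * ((\<Sum>l<dim_col A. A $$ (j, l) * xstar $ l) - y $ j))
      + lam * q * sgn (xstar $ i) * \<bar>xstar $ i\<bar> powr (q - 1) = 0"
proof -
  define N where "N = dim_col A"
  define m where "m = dim_row A"
  define Gf where "Gf w = (\<Sum>j<m. A $$ (j, i) * ((\<Sum>l<N. A $$ (j, l) * w l) - y $ j))" for w :: "nat \<Rightarrow> real"
  define s where "s k = k * N + i" for k
  have dims: "dim_vec (x n) = N" for n unfolding N_def using gaita_dims[OF x0_dim gaita] .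
  have smono: "strict_mono s" unfolding s_def using N_pos N_def by (intro strict_monoI) simp
  have smod: "s k mod N = i" for k unfolding s_def using i N_def by simp
  have s1mono: "strict_mono (\<lambda>k. Suc (s k))" using smono by (simp add: strict_mono_def)
  have cs: "(\<lambda>k. x (s k) $ l) \<longlonglongrightarrow> xstar $ l" if "l < N" for l
    using LIMSEQ_subseq_LIMSEQ[OF conv smono] that N_def by (simp add: o_def)
  define z where "z k = x (s k) $ i - mu * Gf (\<lambda>l. x (s k) $ l)" for k
  define v where "v k = x (Suc (s k)) $ i" for k
  have vz: "v k = thr mu lam q (z k) (x (s k) $ i)" for k
  proof -
    have "col A i \<bullet> (A *\<^sub>v x (s k) - y) = Gf (\<lambda>l. x (s k) $ l)"
      unfolding Gf_def m_def N_def using grad_expand[OF _ y_dim i] dims N_def by simp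
    thus ?thesis unfolding v_def z_def gaita gaita_step_def Let_def smod[unfolded N_def]
      using i N_def by simp
  qed
  define zs where "zs = xstar $ i - mu * Gf (\<lambda>l. xstar $ l)"
  have zlim: "z \<longlonglongrightarrow> zs" unfolding z_def zs_def Gf_def
    using i cs N_def by (intro tendsto_intros) auto
  have vlim: "v \<longlonglongrightarrow> xstar $ i" unfolding v_def
    using LIMSEQ_subseq_LIMSEQ[OF conv[OF i] s1mono] by (simp add: o_def)
  have ev0: "eventually (\<lambda>k. v k \<noteq> 0) sequentially"
    using tendsto_imp_eventually_ne[OF vlim xi] .
  define c where "c = mu * lam * q"
  have evf: "eventually (\<lambda>k. \<bar>v k\<bar> \<ge> eta lam mu q \<and>
      v k - z k + c * (v k / \<bar>v k\<bar>) * \<bar>v k\<bar> powr (q - 1) = 0) sequentially"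
    using ev0
  proof (rule eventually_mono)
    fix k assume "v k \<noteq> 0"
    hence "thr mu lam q (z k) (x (s k) $ i) \<noteq> 0" using vz by simp
    show "\<bar>v k\<bar> \<ge> eta lam mu q \<and> v k - z k + c * (v k / \<bar>v k\<bar>) * \<bar>v k\<bar> powr (q - 1) = 0"
    proof -
      have sv: "v k / \<bar>v k\<bar> = sgn (v k)" using \<open>v k \<noteq> 0\<close> by (auto simp: sgn_if)
      show ?thesis using thr_facts[OF mu_pos lam_pos q_pos q_lt1 \<open>thr mu lam q (z k) (x (s k) $ i) \<noteq> 0\<close>]
        unfolding vz[symmetric] c_def sv by (simp add: mult.assoc)
    qed
  qed
  have etab: "eta lam mu q \<le> \<bar>xstar $ i\<bar>"
    using tendsto_lowerbound[OF tendsto_rabs[OF vlim] eventually_mono[OF evf] trivial_limit_sequentially]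
    by blast
  have L: "(\<lambda>k. v k - z k + c * (v k / \<bar>v k\<bar>) * \<bar>v k\<bar> powr (q - 1))
      \<longlonglongrightarrow> xstar $ i - zs + c * (xstar $ i / \<bar>xstar $ i\<bar>) * \<bar>xstar $ i\<bar> powr (q - 1)"
    using xi by (intro tendsto_intros vlim zlim) auto
  have "(\<lambda>k. v k - z k + c * (v k / \<bar>v k\<bar>) * \<bar>v k\<bar> powr (q - 1)) \<longlonglongrightarrow> 0"
    by (rule Lim_transform_eventually[OF tendsto_const]) (use evf in \<open>auto elim: eventually_mono\<close>)
  hence "xstar $ i - zs + c * (xstar $ i / \<bar>xstar $ i\<bar>) * \<bar>xstar $ i\<bar> powr (q - 1) = 0"
    using L LIMSEQ_unique by blast
  moreover have "xstar $ i / \<bar>xstar $ i\<bar> = sgn (xstar $ i)" using xi by (auto simp: sgn_if)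
  ultimately have "mu * (Gf (\<lambda>l. xstar $ l) + lam * q * sgn (xstar $ i) * \<bar>xstar $ i\<bar> powr (q - 1)) = 0"
    unfolding zs_def c_def by (simp add: algebra_simps)
  hence "Gf (\<lambda>l. xstar $ l) + lam * q * sgn (xstar $ i) * \<bar>xstar $ i\<bar> powr (q - 1) = 0"
    using mu_pos by simp
  thus ?thesis using etab unfolding Gf_def m_def N_def by simp
qed


definition Phi :: "real mat \<Rightarrow> real vec \<Rightarrow> real \<Rightarrow> real \<Rightarrow> (nat \<Rightarrow> real) \<Rightarrow> real" where
  "Phi A y lam q w = (1/2) * (\<Sum>j<dim_row A. ((\<Sum>l<dim_col A. A $$ (j, l) * w l) - y $ j)^2)
     + lam * (\<Sum>i<dim_col A. \<bar>w i\<bar> powr q)"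

lemma core_ineq:
  fixes A :: "real mat" and y :: "real vec" and lam q L \<delta> :: real and xs h :: "nat \<Rightarrow> real" and I :: "nat set"
  defines "N \<equiv> dim_col A" and "m \<equiv> dim_row A"
  defines "r \<equiv> \<lambda>j. (\<Sum>l<N. A $$ (j, l) * xs l) - y $ j"
  defines "g \<equiv> \<lambda>l. (\<Sum>j<m. A $$ (j, l) * r j)"
  defines "S \<equiv> (\<Sum>j<m. \<Sum>l<N. \<bar>A $$ (j, l)\<bar>)"
  assumes lam: "lam > 0" and q0: "0 < q" and q1: "q < 1"
    and I: "I = {i. i < N \<and> xs i \<noteq> 0}"
    and stat: "\<And>i. i \<in> I \<Longrightarrow> g i + lam * q * sgn (xs i) * \<bar>xs i\<bar> powr (q - 1) = 0"
    and quad: "\<And>h. (\<And>l. l \<notin> I \<Longrightarrow> h l = 0) \<Longrightarrow> (\<Sum>j<m. (\<Sum>l<N. A $$ (j, l) * h l)^2) \<ge> L * (\<Sum>l\<in>I. (h l)^2)"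
    and d0: "\<delta> > 0" and d1: "\<delta> \<le> 1" and d2: "\<And>l. l \<in> I \<Longrightarrow> \<delta> < \<bar>xs l\<bar>"
    and d3: "\<And>l. l \<in> I \<Longrightarrow> lam * q * (1 - q) * (\<bar>xs l\<bar> - \<delta>) powr (q - 2) < L"
    and d4: "((\<Sum>l<N. \<bar>g l\<bar>) + m * S^2) * \<delta> powr (1 - q) < lam"
    and hs: "\<And>l. l < N \<Longrightarrow> \<bar>h l\<bar> < \<delta>" and hnz: "\<exists>l<N. h l \<noteq> 0"
  shows "Phi A y lam q (\<lambda>l. xs l + h l) > Phi A y lam q xs"
proof -
  define C where "C = {..<N} - I"
  have IN: "I \<subseteq> {..<N}" using I by auto
  have fI: "finite I" using IN finite_subset by blast
  define Ah where "Ah w j = (\<Sum>l<N. A $$ (j, l) * w l)" for w j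
  define hI where "hI l = (if l \<in> I then h l else 0)" for l
  define hC where "hC l = (if l \<in> C then h l else 0)" for l
  have hsplit: "h l = hI l + hC l" if "l < N" for l using that unfolding hI_def hC_def C_def by auto
  have Ah_split: "Ah h j = Ah hI j + Ah hC j" for j
    unfolding Ah_def by (simp add: hsplit sum.distrib algebra_simps)
  have lin: "(\<Sum>j<m. r j * Ah h j) = (\<Sum>l<N. g l * h l)"
    unfolding Ah_def g_def by (simp add: sum_distrib_left sum_distrib_right sum.swap[of _ "{..<N}"] algebra_simps)
  have E1: "Phi A y lam q (\<lambda>l. xs l + h l) - Phi A y lam q xs
     = (\<Sum>l<N. g l * h l) + (1/2) * (\<Sum>j<m. (Ah h j)^2) + lam * (\<Sum>l<N. \<bar>xs l + h l\<bar> powr q - \<bar>xs l\<bar> powr q)"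
  proof -
    have "(\<Sum>l<N. A $$ (j, l) * (xs l + h l)) - y $ j = r j + Ah h j" for j
      unfolding r_def Ah_def by (simp add: algebra_simps sum.distrib)
    hence "(\<Sum>j<m. ((\<Sum>l<N. A $$ (j, l) * (xs l + h l)) - y $ j)^2) = (\<Sum>j<m. (r j)^2) + 2 * (\<Sum>j<m. r j * Ah h j) + (\<Sum>j<m. (Ah h j)^2)"
      by (simp add: power2_eq_square algebra_simps sum.distrib sum_distrib_left)
    thus ?thesis unfolding Phi_def N_def[symmetric] m_def[symmetric] r_def[symmetric] lin
      by (simp add: sum_subtractf algebra_simps r_def)
  qed
  have hI_abs: "\<bar>hI l\<bar> \<le> 1" for l unfolding hI_def using hs d1 IN
    by (auto simp: less_imp_le intro: order_trans[OF less_imp_le[OF hs]])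
  have Sj: "(\<Sum>l<N. \<bar>A $$ (j, l)\<bar>) \<le> S" if "j < m" for j
    unfolding S_def using that by (intro member_le_sum[of j "{..<m}" "\<lambda>j. \<Sum>l<N. \<bar>A $$ (j, l)\<bar>"]) (auto intro: sum_nonneg)
  have S0: "S \<ge> 0" unfolding S_def by (intro sum_nonneg) auto
  have Ajl: "\<bar>A $$ (j, l)\<bar> \<le> S" if "j < m" "l < N" for j l
    using member_le_sum[of l "{..<N}" "\<lambda>l. \<bar>A $$ (j, l)\<bar>"] that Sj[OF that(1)] by auto
  define TC where "TC = (\<Sum>l\<in>C. \<bar>h l\<bar>)"
  have fC: "finite C" unfolding C_def by simp
  have CN: "C \<subseteq> {..<N}" unfolding C_def by auto
  have TC_eq: "(\<Sum>l<N. \<bar>hC l\<bar>) = TC"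
  proof -
    have "(\<Sum>l<N. \<bar>hC l\<bar>) = (\<Sum>l\<in>C. \<bar>hC l\<bar>)"
      using CN by (intro sum.mono_neutral_right) (auto simp: hC_def)
    thus ?thesis unfolding TC_def hC_def by simp
  qed
  have TC0: "TC \<ge> 0" unfolding TC_def by (intro sum_nonneg) auto
  have aB: "\<bar>Ah hI j\<bar> \<le> S" if "j < m" for j
  proof -
    have "\<bar>Ah hI j\<bar> \<le> (\<Sum>l<N. \<bar>A $$ (j, l) * hI l\<bar>)" unfolding Ah_def by (rule sum_abs)
    also have "\<dots> \<le> (\<Sum>l<N. \<bar>A $$ (j, l)\<bar>)"
      using hI_abs by (intro sum_mono) (auto simp: abs_mult intro: mult_left_le)
    also have "\<dots> \<le> S" using Sj[OF that] .
    finally show ?thesis .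
  qed
  have bB: "\<bar>Ah hC j\<bar> \<le> S * TC" if "j < m" for j
  proof -
    have "\<bar>Ah hC j\<bar> \<le> (\<Sum>l<N. \<bar>A $$ (j, l) * hC l\<bar>)" unfolding Ah_def by (rule sum_abs)
    also have "\<dots> \<le> (\<Sum>l<N. S * \<bar>hC l\<bar>)"
      using Ajl[OF that] by (intro sum_mono) (auto simp: abs_mult intro: mult_right_mono)
    also have "\<dots> = S * TC" using TC_eq by (simp add: sum_distrib_left[symmetric])
    finally show ?thesis .
  qed
  have E2: "(\<Sum>j<m. (Ah h j)^2) \<ge> (\<Sum>j<m. (Ah hI j)^2) - 2 * m * S^2 * TC"
  proof -
    have "(Ah h j)^2 \<ge> (Ah hI j)^2 - 2 * (S * (S * TC))" if "j < m" for j
    proof -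
      have "\<bar>Ah hI j\<bar> * \<bar>Ah hC j\<bar> \<le> S * (S * TC)"
        using aB[OF that] bB[OF that] S0 by (intro mult_mono) auto
      hence "Ah hI j * Ah hC j \<ge> - (S * (S * TC))" by (metis abs_mult abs_le_iff minus_le_iff)
      moreover have "(Ah h j)^2 = (Ah hI j)^2 + 2 * (Ah hI j * Ah hC j) + (Ah hC j)^2"
        unfolding Ah_split by (simp add: power2_eq_square algebra_simps)
      moreover have "(Ah hC j)^2 \<ge> 0" by simp
      ultimately show ?thesis by linarith
    qed
    hence "(\<Sum>j<m. (Ah h j)^2) \<ge> (\<Sum>j<m. (Ah hI j)^2 - 2 * (S * (S * TC)))"
      by (intro sum_mono) auto
    thus ?thesis by (simp add: sum_subtractf power2_eq_square algebra_simps)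
  qed
  have E3: "(\<Sum>j<m. (Ah hI j)^2) \<ge> L * (\<Sum>l\<in>I. (h l)^2)"
  proof -
    have "(\<Sum>j<m. (Ah hI j)^2) \<ge> L * (\<Sum>l\<in>I. (hI l)^2)"
      unfolding Ah_def by (rule quad) (simp add: hI_def)
    moreover have "(\<Sum>l\<in>I. (hI l)^2) = (\<Sum>l\<in>I. (h l)^2)" unfolding hI_def by simp
    ultimately show ?thesis by simp
  qed
  define F where "F l = g l * h l + lam * (\<bar>xs l + h l\<bar> powr q - \<bar>xs l\<bar> powr q)" for l
  define K where "K l = lam * q * (1 - q) * (\<bar>xs l\<bar> - \<delta>) powr (q - 2)" for l
  have E4: "(\<Sum>l<N. g l * h l) + lam * (\<Sum>l<N. \<bar>xs l + h l\<bar> powr q - \<bar>xs l\<bar> powr q)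
      = (\<Sum>l\<in>I. F l) + (\<Sum>l\<in>C. F l)"
  proof -
    have "(\<Sum>l<N. g l * h l) + lam * (\<Sum>l<N. \<bar>xs l + h l\<bar> powr q - \<bar>xs l\<bar> powr q) = (\<Sum>l<N. F l)"
      unfolding F_def by (simp add: sum.distrib sum_distrib_left)
    also have "\<dots> = (\<Sum>l\<in>{..<N} - I. F l) + (\<Sum>l\<in>I. F l)" using IN by (intro sum.subset_diff) auto
    finally show ?thesis unfolding C_def by simp
  qed
  have E5: "F l \<ge> - (K l / 2) * (h l)^2" if l: "l \<in> I" for l
  proof -
    have "\<bar>(xs l + h l) - xs l\<bar> \<le> \<delta>" using hs IN l by (auto simp: less_imp_le)
    from taylor_abs_powr[OF q0 q1 d0 d2[OF l] this]
    have T: "\<bar>xs l + h l\<bar> powr q \<ge> \<bar>xs l\<bar> powr q + q * sgn (xs l) * \<bar>xs l\<bar> powr (q - 1) * h l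
        - q * (1 - q) / 2 * (\<bar>xs l\<bar> - \<delta>) powr (q - 2) * (h l)^2" by simp
    have "lam * (\<bar>xs l + h l\<bar> powr q - \<bar>xs l\<bar> powr q) \<ge> lam * (q * sgn (xs l) * \<bar>xs l\<bar> powr (q - 1) * h l
        - q * (1 - q) / 2 * (\<bar>xs l\<bar> - \<delta>) powr (q - 2) * (h l)^2)"
      using T lam by (intro mult_left_mono) auto
    moreover have "g l = - (lam * q * sgn (xs l) * \<bar>xs l\<bar> powr (q - 1))" using stat[OF l] by simp
    ultimately show ?thesis unfolding F_def K_def by (simp add: algebra_simps)
  qed
  define Cm where "Cm = (\<Sum>l<N. \<bar>g l\<bar>) + m * S^2"
  have E6: "F l - m * S^2 * \<bar>h l\<bar> \<ge> 0 \<and> (h l \<noteq> 0 \<longrightarrow> F l - m * S^2 * \<bar>h l\<bar> > 0)" if l: "l \<in> C" for l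
  proof -
    have lN: "l < N" and xs0: "xs l = 0" using l unfolding C_def I by auto
    have Fl: "F l = g l * h l + lam * \<bar>h l\<bar> powr q" unfolding F_def xs0 by simp
    define c where "c = \<bar>g l\<bar> + m * S^2"
    have c0: "c \<ge> 0" unfolding c_def by simp
    have cC: "c \<le> Cm" unfolding c_def Cm_def using member_le_sum[of l "{..<N}" "\<lambda>l. \<bar>g l\<bar>"] lN by auto
    have low: "F l - m * S^2 * \<bar>h l\<bar> \<ge> lam * \<bar>h l\<bar> powr q - c * \<bar>h l\<bar>"
      unfolding Fl c_def using abs_ge_minus_self[of "g l * h l"] by (simp add: abs_mult algebra_simps)
    show ?thesis
    proof (cases "h l = 0")
      case True thus ?thesis unfolding Fl by simp
    next
      case False
      have hp: "\<bar>h l\<bar> > 0" using False by simp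
      have split: "\<bar>h l\<bar> = \<bar>h l\<bar> powr q * \<bar>h l\<bar> powr (1 - q)" using hp by (simp add: powr_add[symmetric])
      have "\<bar>h l\<bar> powr (1 - q) \<le> \<delta> powr (1 - q)" using hs[OF lN] q1 by (intro powr_mono2) auto
      hence "c * \<bar>h l\<bar> powr (1 - q) \<le> Cm * \<delta> powr (1 - q)"
        using c0 cC by (intro mult_mono) auto
      hence "c * \<bar>h l\<bar> powr (1 - q) < lam" using d4 unfolding Cm_def by simp
      hence "\<bar>h l\<bar> powr q * (lam - c * \<bar>h l\<bar> powr (1 - q)) > 0" using hp by simp
      moreover have "lam * \<bar>h l\<bar> powr q - c * \<bar>h l\<bar> = \<bar>h l\<bar> powr q * (lam - c * \<bar>h l\<bar> powr (1 - q))"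
        by (subst (2) split) (simp add: algebra_simps)
      ultimately show ?thesis using low False by linarith
    qed
  qed
  have KL: "K l < L" if "l \<in> I" for l unfolding K_def using d3[OF that] .
  define PI where "PI = (\<Sum>l\<in>I. (L - K l) / 2 * (h l)^2)"
  define PC where "PC = (\<Sum>l\<in>C. F l - m * S^2 * \<bar>h l\<bar>)"
  have PI_ge: "(\<Sum>l\<in>I. F l) + (1/2) * (L * (\<Sum>l\<in>I. (h l)^2)) \<ge> PI"
  proof -
    have "(\<Sum>l\<in>I. F l) \<ge> (\<Sum>l\<in>I. - (K l / 2) * (h l)^2)" using E5 by (intro sum_mono) auto
    moreover have "PI = (\<Sum>l\<in>I. - (K l / 2) * (h l)^2) + (1/2) * (L * (\<Sum>l\<in>I. (h l)^2))"
      unfolding PI_def by (simp add: sum_distrib_left sum.distrib[symmetric] algebra_simps diff_divide_distrib)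
    ultimately show ?thesis by linarith
  qed
  have PC_eq: "(\<Sum>l\<in>C. F l) - m * S^2 * TC = PC"
    unfolding PC_def TC_def by (simp add: sum_subtractf sum_distrib_left)
  have PIt: "(L - K l) / 2 * (h l)^2 \<ge> 0" if "l \<in> I" for l
  proof -
    have "(L - K l) / 2 \<ge> 0" using KL[OF that] by simp
    thus ?thesis by simp
  qed
  have PIp: "(L - K l) / 2 * (h l)^2 > 0" if "l \<in> I" "h l \<noteq> 0" for l
  proof -
    have "(L - K l) / 2 > 0" using KL[OF that(1)] by simp
    thus ?thesis using that(2) by simp
  qed
  have PI0: "PI \<ge> 0" unfolding PI_def using PIt by (intro sum_nonneg) auto
  have PC0: "PC \<ge> 0" unfolding PC_def using E6 by (intro sum_nonneg) auto
  have pos: "PI + PC > 0"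
  proof -
    obtain l where lN: "l < N" and hl: "h l \<noteq> 0" using hnz by blast
    show ?thesis
    proof (cases "l \<in> I")
      case True
      have "PI > 0" unfolding PI_def
        using PIt PIp hl True fI by (intro sum_pos2[of I l]) auto
      thus ?thesis using PC0 by simp
    next
      case False
      hence lC: "l \<in> C" unfolding C_def using lN by simp
      have "PC > 0" unfolding PC_def
        using E6 lC hl fC by (intro sum_pos2[of C l]) auto
      thus ?thesis using PI0 by simp
    qed
  qed
  have "Phi A y lam q (\<lambda>l. xs l + h l) - Phi A y lam q xs \<ge> PI + PC"
  proof -
    have "Phi A y lam q (\<lambda>l. xs l + h l) - Phi A y lam q xs
        = ((\<Sum>l\<in>I. F l) + (\<Sum>l\<in>C. F l)) + (1/2) * (\<Sum>j<m. (Ah h j)^2)"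
      using E1 E4 by linarith
    moreover have "(1/2) * (\<Sum>j<m. (Ah h j)^2) \<ge> (1/2) * (L * (\<Sum>l\<in>I. (h l)^2)) - m * S^2 * TC"
      using E2 E3 by linarith
    ultimately show ?thesis using PI_ge PC_eq by linarith
  qed
  thus ?thesis using pos by linarith
qed

lemma exists_delta:
  fixes I :: "nat set" and a :: "nat \<Rightarrow> real" and lam q L Cm :: real
  assumes fI: "finite I" and a: "\<And>l. l \<in> I \<Longrightarrow> a l > 0"
    and aL: "\<And>l. l \<in> I \<Longrightarrow> lam * q * (1 - q) * a l powr (q - 2) < L"
    and lam: "lam > 0" and q0: "0 < q" and q1: "q < 1"
  shows "\<exists>\<delta>. \<delta> > 0 \<and> \<delta> \<le> 1 \<and> (\<forall>l\<in>I. \<delta> < a l) \<and>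
     (\<forall>l\<in>I. lam * q * (1 - q) * (a l - \<delta>) powr (q - 2) < L) \<and> Cm * \<delta> powr (1 - q) < lam"
proof -
  have e1: "eventually (\<lambda>\<delta>. \<delta> > 0 \<and> \<delta> \<le> 1) (at_right (0::real))"
    unfolding eventually_at_right_field by (intro exI[of _ 1]) auto
  have e2: "eventually (\<lambda>\<delta>. \<delta> < a l \<and> lam * q * (1 - q) * (a l - \<delta>) powr (q - 2) < L) (at_right 0)"
    if l: "l \<in> I" for l
  proof -
    have t1: "((\<lambda>\<delta>. \<delta>) \<longlongrightarrow> 0) (at_right (0::real))" by (rule tendsto_ident_at)
    have "eventually (\<lambda>\<delta>. \<delta> < a l) (at_right 0)" using order_tendstoD(2)[OF t1 a[OF l]] .
    moreover have "((\<lambda>\<delta>. lam * q * (1 - q) * (a l - \<delta>) powr (q - 2)) \<longlongrightarrow> lam * q * (1 - q) * (a l - 0) powr (q - 2)) (at_right 0)"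
      using a[OF l] by (intro tendsto_intros t1) auto
    hence "eventually (\<lambda>\<delta>. lam * q * (1 - q) * (a l - \<delta>) powr (q - 2) < L) (at_right 0)"
      using order_tendstoD(2) aL[OF l] by simp
    ultimately show ?thesis by (auto elim: eventually_elim2)
  qed
  have e3: "eventually (\<lambda>\<delta>. Cm * \<delta> powr (1 - q) < lam) (at_right (0::real))"
  proof -
    have "((\<lambda>\<delta>. \<delta> powr (1 - q)) \<longlongrightarrow> 0 powr (1 - q)) (at_right (0::real))"
      using q1 by (intro tendsto_powr') (auto simp: eventually_at_right_field intro: tendsto_ident_at exI[of _ 1])
    hence "((\<lambda>\<delta>. Cm * \<delta> powr (1 - q)) \<longlongrightarrow> Cm * 0) (at_right (0::real))"
      by (intro tendsto_intros) simp
    thus ?thesis using order_tendstoD(2) lam by simp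
  qed
  have "eventually (\<lambda>\<delta>. (\<delta> > 0 \<and> \<delta> \<le> 1) \<and> (\<forall>l\<in>I. \<delta> < a l \<and> lam * q * (1 - q) * (a l - \<delta>) powr (q - 2) < L)
      \<and> Cm * \<delta> powr (1 - q) < lam) (at_right 0)"
  proof -
    have e2': "eventually (\<lambda>\<delta>. \<forall>l\<in>I. \<delta> < a l \<and> lam * q * (1 - q) * (a l - \<delta>) powr (q - 2) < L) (at_right 0)"
      using e2 by (intro eventually_ball_finite[OF fI]) auto
    show ?thesis using eventually_conj[OF e1 eventually_conj[OF e2' e3]] by simp
  qed
  then obtain \<delta> where "(\<delta> > 0 \<and> \<delta> \<le> 1) \<and> (\<forall>l\<in>I. \<delta> < a l \<and> lam * q * (1 - q) * (a l - \<delta>) powr (q - 2) < L)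
      \<and> Cm * \<delta> powr (1 - q) < lam"
    using eventually_happens'[OF trivial_limit_at_right_real] by blast
  thus ?thesis by blast
qed

theorem theorem6:
  fixes A :: "real mat" and y :: "real vec" and lam q mu :: real
    and x :: "nat \<Rightarrow> real vec" and xstar :: "real vec"
  assumes N_pos: "dim_col A > 0"
    and y_dim: "dim_vec y = dim_row A"
    and lam_pos: "lam > 0" and q_pos: "0 < q" and q_lt1: "q < 1"
    and mu_pos: "0 < mu" and mu_lt: "mu < 1 / Lmax A"
    and x0_dim: "dim_vec (x 0) = dim_col A"
    and gaita: "\<And>n. x (Suc n) = gaita_step A y lam q mu n (x n)"
    and xstar_dim: "dim_vec xstar = dim_col A"
    and conv: "\<And>i. i < dim_col A \<Longrightarrow> (\<lambda>n. x n $ i) \<longlonglongrightarrow> xstar $ i"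
    and cond: "(let I = supp xstar;
                    lmin = lambda_min (transpose_mat (submatrix A UNIV I) * submatrix A UNIV I);
                    e = Min ((\<lambda>i. \<bar>xstar $ i\<bar>) ` I)
                in (lmin > 0 \<and> 0 < lam \<and> lam < lmin * e powr (2 - q) / (q * (1 - q)))
                 \<or> (lmin / Lmax A > q / 2 \<and> q / (2 * lmin) < mu \<and> mu < 1 / Lmax A))"
  shows "strict_local_min (dim_col A) (T_obj A y lam q) xstar"
proof -
  define N where "N = dim_col A"
  define m where "m = dim_row A"
  define I where "I = supp xstar"
  define lmin where "lmin = lambda_min (transpose_mat (submatrix A UNIV I) * submatrix A UNIV I)"
  define e where "e = Min ((\<lambda>i. \<bar>xstar $ i\<bar>) ` I)"
  define xs where "xs l = xstar $ l" for l
  have I_eq: "I = {i. i < N \<and> xs i \<noteq> 0}" unfolding I_def supp_def xs_def N_def xstar_dim ..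
  have IN: "I \<subseteq> {..<N}" using I_eq by auto
  have fI: "finite I" using IN finite_subset by blast
  define r where "r j = (\<Sum>l<N. A $$ (j, l) * xs l) - y $ j" for j
  define g where "g l = (\<Sum>j<m. A $$ (j, l) * r j)" for l
  define S where "S = (\<Sum>j<m. \<Sum>l<N. \<bar>A $$ (j, l)\<bar>)"
  have statI: "\<bar>xs i\<bar> \<ge> eta lam mu q \<and> g i + lam * q * sgn (xs i) * \<bar>xs i\<bar> powr (q - 1) = 0"
    if i: "i \<in> I" for i
    using limit_stationary[OF N_pos y_dim lam_pos q_pos q_lt1 mu_pos x0_dim gaita conv, of i] i I_eq
    unfolding g_def r_def xs_def m_def N_def by auto
  define L where "L = (if I = {} then 0 else lmin)"
  have quad: "(\<Sum>j<m. (\<Sum>l<N. A $$ (j, l) * h l)^2) \<ge> L * (\<Sum>l\<in>I. (h l)^2)"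
    if h: "\<And>l. l \<notin> I \<Longrightarrow> h l = 0" for h
  proof (cases "I = {}")
    case True thus ?thesis unfolding L_def by (simp add: sum_nonneg)
  next
    case False
    thus ?thesis using rayleigh_supp[of I A h] IN h unfolding L_def lmin_def m_def N_def by simp
  qed
  have Lq: "lam * q * (1 - q) * \<bar>xs i\<bar> powr (q - 2) < L" if i: "i \<in> I" for i
  proof -
    have LI: "L = lmin" using i unfolding L_def by auto
    have xi0: "\<bar>xs i\<bar> > 0" using i I_eq by auto
    have cond': "(lmin > 0 \<and> 0 < lam \<and> lam < lmin * e powr (2 - q) / (q * (1 - q)))
                 \<or> (lmin / Lmax A > q / 2 \<and> q / (2 * lmin) < mu \<and> mu < 1 / Lmax A)"
      using cond unfolding Let_def I_def[symmetric] lmin_def[symmetric] e_def[symmetric] .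
    show ?thesis unfolding LI
    proof (cases "lmin > 0 \<and> 0 < lam \<and> lam < lmin * e powr (2 - q) / (q * (1 - q))")
      case True
      have eI: "e \<in> (\<lambda>i. \<bar>xstar $ i\<bar>) ` I" unfolding e_def using fI i by (intro Min_in) auto
      hence e0: "e > 0" using I_eq xs_def by auto
      have ele: "e \<le> \<bar>xs i\<bar>" unfolding e_def xs_def using fI i by (intro Min_le) auto
      have "\<bar>xs i\<bar> powr (q - 2) \<le> e powr (q - 2)" using powr_mono2'[of "q - 2" e "\<bar>xs i\<bar>"] q_lt1 e0 ele by simp
      moreover have qq: "q * (1 - q) > 0" using q_pos q_lt1 by simp
      have "lam * (q * (1 - q)) < lmin * e powr (2 - q)" using True qq by (simp add: pos_less_divide_eq)
      hence "lam * (q * (1 - q)) * e powr (q - 2) < lmin * e powr (2 - q) * e powr (q - 2)"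
        using e0 by (intro mult_strict_right_mono) auto
      moreover have "e powr (2 - q) * e powr (q - 2) = 1" using e0 by (simp add: powr_add[symmetric])
      ultimately have "lam * (q * (1 - q)) * e powr (q - 2) < lmin" by (simp add: mult.assoc)
      moreover have "lam * (q * (1 - q)) * \<bar>xs i\<bar> powr (q - 2) \<le> lam * (q * (1 - q)) * e powr (q - 2)"
        using \<open>\<bar>xs i\<bar> powr (q - 2) \<le> e powr (q - 2)\<close> lam_pos qq by (intro mult_left_mono) auto
      ultimately show "lam * q * (1 - q) * \<bar>xs i\<bar> powr (q - 2) < lmin" by (simp add: mult.assoc)
    next
      case False
      hence B: "lmin / Lmax A > q / 2" "q / (2 * lmin) < mu" using cond' by auto
      have "1 / Lmax A > 0" using mu_pos mu_lt by linarith
      hence Lm0: "Lmax A > 0" by simp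
      have "lmin / Lmax A > 0" using B(1) q_pos by linarith
      hence lm0: "lmin > 0" using Lm0 by (simp add: zero_less_divide_iff)
      have qm: "q / (2 * mu) < lmin" using B(2) lm0 mu_pos by (simp add: field_simps)
      have eta_i: "\<bar>xs i\<bar> \<ge> eta lam mu q" using statI[OF i] by simp
      have "\<bar>xs i\<bar> powr (q - 2) \<le> eta lam mu q powr (q - 2)"
        using powr_mono2'[of "q - 2" "eta lam mu q" "\<bar>xs i\<bar>"] q_lt1 eta_pos[OF mu_pos lam_pos q_pos q_lt1] eta_i by simp
      also have "\<dots> = eta lam mu q powr (-(2 - q))" by simp
      also have "\<dots> = inverse (eta lam mu q powr (2 - q))" by (rule powr_minus)
      also have "\<dots> = 1 / (2*lam*mu*(1-q))" unfolding eta_pow[OF mu_pos lam_pos q_pos q_lt1] by (simp add: inverse_eq_divide)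
      finally have "lam * q * (1 - q) * \<bar>xs i\<bar> powr (q - 2) \<le> lam * q * (1 - q) * (1 / (2*lam*mu*(1-q)))"
        using lam_pos q_pos q_lt1 by (intro mult_left_mono) auto
      also have "\<dots> = q / (2 * mu)" using lam_pos q_lt1 mu_pos by (simp add: field_simps)
      finally show "lam * q * (1 - q) * \<bar>xs i\<bar> powr (q - 2) < lmin" using qm by simp
    qed
  qed
  define Cm where "Cm = (\<Sum>l<N. \<bar>g l\<bar>) + m * S^2"
  obtain \<delta> where d0: "\<delta> > 0" and d1: "\<delta> \<le> 1" and d2: "\<forall>l\<in>I. \<delta> < \<bar>xs l\<bar>"
      and d3: "\<forall>l\<in>I. lam * q * (1 - q) * (\<bar>xs l\<bar> - \<delta>) powr (q - 2) < L"
      and d4: "Cm * \<delta> powr (1 - q) < lam"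
    using exists_delta[of I "\<lambda>l. \<bar>xs l\<bar>" lam q L Cm] fI Lq lam_pos q_pos q_lt1 I_eq by auto
  show ?thesis unfolding strict_local_min_def
  proof (intro exI[of _ \<delta>] conjI allI impI)
    show "\<delta> > 0" by (rule d0)
    fix v assume H: "dim_vec v = dim_col A \<and> v \<noteq> xstar \<and> sqrt (\<Sum>i<dim_col A. (v $ i - xstar $ i)^2) < \<delta>"
    define h where "h l = v $ l - xs l" for l
    have hs: "\<bar>h l\<bar> < \<delta>" if l: "l < N" for l
    proof -
      have "(h l)^2 \<le> (\<Sum>i<N. (h i)^2)" using l by (intro member_le_sum) auto
      hence "sqrt ((h l)^2) \<le> sqrt (\<Sum>i<N. (h i)^2)" by (rule real_sqrt_le_mono)
      thus ?thesis using H unfolding h_def xs_def N_def by simp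
    qed
    have hnz: "\<exists>l<N. h l \<noteq> 0"
    proof (rule ccontr)
      assume "\<not> (\<exists>l<N. h l \<noteq> 0)"
      hence "v = xstar" using H xstar_dim unfolding h_def xs_def N_def by (intro eq_vecI) auto
      thus False using H by simp
    qed
    have "Phi A y lam q (\<lambda>l. xs l + h l) > Phi A y lam q xs"
      using core_ineq[where A=A and y=y and lam=lam and q=q and L=L and \<delta>=\<delta> and xs=xs and h=h and I=I] lam_pos q_pos q_lt1 I_eq statI quad d0 d1 d2 d3 d4 hs hnz
      unfolding N_def m_def r_def g_def S_def Cm_def by auto
    moreover have "(\<lambda>l. xs l + h l) = (\<lambda>l. v $ l)" unfolding h_def by simp
    moreover have "T_obj A y lam q v = Phi A y lam q (\<lambda>l. v $ l)" using T_expand[of v A y lam q] H unfolding Phi_def by simp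
    moreover have "T_obj A y lam q xstar = Phi A y lam q xs" using T_expand[of xstar A y lam q] xstar_dim unfolding Phi_def xs_def by simp
    ultimately show "T_obj A y lam q xstar < T_obj A y lam q v" by simp
  qed
qed

end
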